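(* Consider $K$ devices with local datasets $\mathcal D_1,\dots,\mathcal D_K$, $\mathcal D=\bigcup_k\mathcal D_k$, $|\mathcal D|=\sum_k|\mathcal D_k|$, and in round $t$ dropout rates $\gamma_{k,t}\in[0,1)$ and regularization coefficient $\lambda_t>0$. Suppose that for every device $k$ the hypotheses below hold. For each $k$ let $j_k$ be drawn uniformly from the indices of $\mathcal D_k$, let $\mathcal D^{\{j\}}$ denote the collection of datasets $\mathcal D_k^{j_k}=\mathcal D_k\setminus\{\boldsymbol x_{j_k}\}$, and let $\boldsymbol x_{\{j\}}=(\boldsymbol x_{j_1},\dots,\boldsymbol x_{j_K})$. Then $$\mathbb E_{\mathcal D,\{j\}}\Big|\mathcal L'_{\{\nu_{k,t}\}}\big(\boldsymbol\theta_{\mathcal L'}(\mathcal D^{\{j\}}),\boldsymbol x_{\{j\}}\big)-\mathcal L'_{\{\nu_{k,t}\}}\big(\boldsymbol\theta_{\mathcal L'}(\mathcal D),\boldsymbol x_{\{j\}}\big)\Big|\le\sum_{k=1}^K\frac{2\eta^2}{\big(\Lambda_{k,t,\min}+2\lambda_t(2\gamma_{k,t}-\gamma_{k,t}^2)\big)|\mathcal D|}.$$ Hypotheses, for each $k$ (with $\hat{\boldsymbol\theta}_k=\boldsymbol\theta_{\ell_{k,\lambda_t}}(\mathcal D_k)$, $\hat{\boldsymbol\theta}_k^{j}=\boldsymbol\theta_{\ell_{k,\lambda_t}}(\mathcal D_k^{j})$): (i) $\theta\mapsto\ell_{k,\lambda_t}(\theta,\boldsymbol x)$ is $\eta$-Lipschitz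 for every $\boldsymbol x$; (ii) $\hat{\boldsymbol\theta}_k^{j}$ is close to $\hat{\boldsymbol\theta}_k$ in the sense that the second-order Taylor expansion of $\ell_{k,\lambda_t}(\cdot;\mathcal D_k)$ about $\hat{\boldsymbol\theta}_k$ is exact at $\hat{\boldsymbol\theta}_k^{j}$; (iii) $\nabla^2\ell_{k,\lambda_t}(\hat{\boldsymbol\theta}_k;\mathcal D_k)$ is positive semidefinite and $\Lambda_{k,t,\min}$ is the smallest eigenvalue of the Hessian of the unregularized empirical loss $\ell_k$ at $\hat{\boldsymbol\theta}_k$.
   Context: Pre-trained parameters $\boldsymbol\theta_0$; per-sample loss $\ell(\boldsymbol\theta,\boldsymbol x)$; datasets consist of i.i.d. samples. Regularized per-sample loss of device $k$: $\ell_{k,\lambda_t}(\boldsymbol\theta,\boldsymbol x)=\ell(\boldsymbol\theta,\boldsymbol x)+\lambda_t\,\mathbb E_{\boldsymbol d}\|\boldsymbol d\odot(\boldsymbol\theta-\boldsymbol\theta_0)\|_2^2=\ell(\boldsymbol\theta,\boldsymbol x)+\lambda_t(2\gamma_{k,t}-\gamma_{k,t}^2)\|\boldsymbol\theta-\boldsymbol\theta_0\|_2^2$, where $\boldsymbol d$ has i.i.d. Bernoulli$(2\gamma_{k,t}-\gamma_{k,t}^2)$ entries; regularized empirical loss $\ell_{k,\lambda_t}(\boldsymbol\theta;S)$ is the average of $\ell$ over $S$ plus the same penalty, and $\boldsymbol\theta_{\ell_{k,\lambda_t}}(S)$ is its minimizer. The global regularized objective is $\mathcal L'_{\{\nu_{k,t}\}}=\sum_{k}\frac{|\mathcal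 D_k|}{|\mathcal D|}\min_{\boldsymbol\theta_k}\ell_{k,\lambda_t}(\boldsymbol\theta_k;\mathcal D_k)$, so its minimizer $\boldsymbol\theta_{\mathcal L'}(\mathcal D)$ is the tuple of per-device minimizers $(\hat{\boldsymbol\theta}_k)_k$ (and $\boldsymbol\theta_{\mathcal L'}(\mathcal D^{\{j\}})=(\hat{\boldsymbol\theta}_k^{j_k})_k$); its per-sample value at $(\boldsymbol\theta_k)_k$ on $\boldsymbol x_{\{j\}}$ is $\sum_k\frac{|\mathcal D_k|}{|\mathcal D|}\ell_{k,\lambda_t}(\boldsymbol\theta_k,\boldsymbol x_{j_k})$. *)

theory Defs
  imports "HOL-Analysis.Analysis" "HOL-Probability.Probability"
begin

definition grad :: "(real^'n \<Rightarrow> real) \<Rightarrow> real^'n \<Rightarrow> real^'n" where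
  "grad f x = (THE g. (f has_derivative (\<lambda>h. g \<bullet> h)) (at x))"

definition twice_differentiable_at :: "(real^'n \<Rightarrow> real) \<Rightarrow> real^'n \<Rightarrow> bool" where
  "twice_differentiable_at f x \<longleftrightarrow>
     (\<exists>S. open S \<and> x \<in> S \<and> (\<forall>y\<in>S. f differentiable (at y)) \<and> grad f differentiable (at x))"

definition hess :: "(real^'n \<Rightarrow> real) \<Rightarrow> real^'n \<Rightarrow> real^'n^'n" where
  "hess f x = (THE H. (grad f has_derivative (\<lambda>h. H *v h)) (at x))"

definition is_eigenvalue :: "real^'n^'n \<Rightarrow> real \<Rightarrow> bool" where
  "is_eigenvalue A \<mu> \<longleftrightarrow> (\<exists>v. v \<noteq> 0 \<and> A *v v = \<mu> *\<^sub>R v)"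

definition is_smallest_eigenvalue :: "real^'n^'n \<Rightarrow> real \<Rightarrow> bool" where
  "is_smallest_eigenvalue A \<mu> \<longleftrightarrow> is_eigenvalue A \<mu> \<and> (\<forall>\<nu>. is_eigenvalue A \<nu> \<longrightarrow> \<mu> \<le> \<nu>)"

definition psd :: "real^'n^'n \<Rightarrow> bool" where
  "psd A \<longleftrightarrow> (\<forall>v. 0 \<le> v \<bullet> (A *v v))"

text \<open>Keep-probability factor 2 gamma - gamma^2 of the dropout-induced penalty.\<close>
definition keepf :: "real \<Rightarrow> real" where
  "keepf g = 2 * g - g\<^sup>2"

definition reg_loss ::
  "(real^'n \<Rightarrow> 'x \<Rightarrow> real) \<Rightarrow> real^'n \<Rightarrow> real \<Rightarrow> real \<Rightarrow> real^'n \<Rightarrow> 'x \<Rightarrow> real" where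
  "reg_loss l \<theta>0 lam gam \<theta> x = l \<theta> x + lam * keepf gam * (norm (\<theta> - \<theta>0))\<^sup>2"

text \<open>Unregularized empirical loss: average of l over the dataset S (a list, i.e. with
  multiplicities).\<close>
definition emp_loss :: "(real^'n \<Rightarrow> 'x \<Rightarrow> real) \<Rightarrow> 'x list \<Rightarrow> real^'n \<Rightarrow> real" where
  "emp_loss l S \<theta> = sum_list (map (l \<theta>) S) / real (length S)"

definition reg_emp_loss ::
  "(real^'n \<Rightarrow> 'x \<Rightarrow> real) \<Rightarrow> real^'n \<Rightarrow> real \<Rightarrow> real \<Rightarrow> 'x list \<Rightarrow> real^'n \<Rightarrow> real" where
  "reg_emp_loss l \<theta>0 lam gam S \<theta> = emp_loss l S \<theta> + lam * keepf gam * (norm (\<theta> - \<theta>0))\<^sup>2"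

definition loo :: "'x list \<Rightarrow> nat \<Rightarrow> 'x list" where
  "loo S j = take j S @ drop (Suc j) S"

text \<open>Device k (k < K) has n k samples; a joint sample omega assigns to the pair (k,i)
  the i-th sample of device k.\<close>
definition sample_index :: "nat \<Rightarrow> (nat \<Rightarrow> nat) \<Rightarrow> (nat \<times> nat) set" where
  "sample_index K n = Sigma {..<K} (\<lambda>k. {..<n k})"

definition dataset :: "(nat \<Rightarrow> nat) \<Rightarrow> (nat \<times> nat \<Rightarrow> 'x) \<Rightarrow> nat \<Rightarrow> 'x list" where
  "dataset n \<omega> k = map (\<lambda>i. \<omega> (k, i)) [0..<n k]"

definition Lprime_sample ::
  "(real^'n \<Rightarrow> 'x \<Rightarrow> real) \<Rightarrow> real^'n \<Rightarrow> real \<Rightarrow> (nat \<Rightarrow> real) \<Rightarrow> nat \<Rightarrow> (nat \<Rightarrow> nat)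
     \<Rightarrow> (nat \<Rightarrow> real^'n) \<Rightarrow> (nat \<Rightarrow> 'x) \<Rightarrow> real" where
  "Lprime_sample l \<theta>0 lam gam K n thetas xs =
     (\<Sum>k<K. real (n k) / real (\<Sum>k'<K. n k') * reg_loss l \<theta>0 lam (gam k) (thetas k) (xs k))"

end

theory Submission
  imports Defs
begin
lemma grad_eq:
  fixes f :: "real^'n \<Rightarrow> real"
  assumes "(f has_derivative (\<lambda>h. g \<bullet> h)) (at x)"
  shows "grad f x = g"
  unfolding grad_def
proof (rule the_equality)
  show "(f has_derivative (\<lambda>h. g \<bullet> h)) (at x)" by fact
  fix g' assume "(f has_derivative (\<lambda>h. g' \<bullet> h)) (at x)"
  then have "(\<lambda>h. g' \<bullet> h) = (\<lambda>h. g \<bullet> h)" using assms by (rule has_derivative_unique)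
  then have "\<forall>h. (g' - g) \<bullet> h = 0" by (metis inner_diff_left right_minus_eq)
  then show "g' = g" by (metis inner_eq_zero_iff right_minus_eq)
qed

lemma grad_works:
  fixes f :: "real^'n \<Rightarrow> real"
  assumes "f differentiable (at x)"
  shows "(f has_derivative (\<lambda>h. grad f x \<bullet> h)) (at x)"
proof -
  obtain D where D: "(f has_derivative D) (at x)" using assms by (auto simp: differentiable_def)
  then have lin: "linear D" using has_derivative_linear by blast
  have "D = (\<lambda>h. h \<bullet> adjoint D 1)"
    using adjoint_works[OF lin] by (auto simp: fun_eq_iff)
  then have "(f has_derivative (\<lambda>h. adjoint D 1 \<bullet> h)) (at x)" using D by (simp add: inner_commute)
  then show ?thesis using grad_eq by metis
qed

lemma hess_eq:
  fixes f :: "real^'n \<Rightarrow> real"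
  assumes "(grad f has_derivative (\<lambda>h. H *v h)) (at x)"
  shows "hess f x = H"
  unfolding hess_def
proof (rule the_equality)
  show "(grad f has_derivative (\<lambda>h. H *v h)) (at x)" by fact
  fix H' assume "(grad f has_derivative (\<lambda>h. H' *v h)) (at x)"
  then have "(\<lambda>h. H' *v h) = (\<lambda>h. H *v h)" using assms by (rule has_derivative_unique)
  then show "H' = H" by (metis matrix_eq)
qed

lemma hess_works:
  fixes f :: "real^'n \<Rightarrow> real"
  assumes "grad f differentiable (at x)"
  shows "(grad f has_derivative (\<lambda>h. hess f x *v h)) (at x)"
proof -
  obtain D where D: "(grad f has_derivative D) (at x)" using assms by (auto simp: differentiable_def)
  then have lin: "linear D" using has_derivative_linear by blast
  have "D = (\<lambda>h. matrix D *v h)"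
    using matrix_works[of D] lin by (auto simp: fun_eq_iff linear_matrix_vector_mul_eq)
  then have "(grad f has_derivative (\<lambda>h. matrix D *v h)) (at x)" using D by simp
  then show ?thesis using hess_eq by metis
qed


lemma second_diff_approx:
  fixes f :: "real^'n \<Rightarrow> real" and g :: "real^'n \<Rightarrow> real^'n" and H :: "real^'n^'n"
  assumes d: "\<And>y. y \<in> ball x r \<Longrightarrow> (f has_derivative (\<lambda>k. g y \<bullet> k)) (at y)"
    and rb: "\<And>y. norm y < r \<Longrightarrow> norm (g (x+y) - g x - H *v y) \<le> \<epsilon> * norm y"
    and e0: "0 \<le> \<epsilon>"
    and hpos: "0 < h" and hr: "h * (norm u + norm v) < r"
  shows "\<bar>f (x + h *\<^sub>R u + h *\<^sub>R v) - f (x + h *\<^sub>R u) - f (x + h *\<^sub>R v) + f x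
           - h\<^sup>2 * (u \<bullet> (H *v v))\<bar> \<le> 2 * \<epsilon> * h\<^sup>2 * (norm u + norm v)\<^sup>2"
proof -
  define N where "N = norm u + norm v"
  define \<phi> where "\<phi> t = f (x + t *\<^sub>R u + h *\<^sub>R v) - f (x + t *\<^sub>R u)" for t
  define \<phi>' where "\<phi>' t = (g (x + t *\<^sub>R u + h *\<^sub>R v) - g (x + t *\<^sub>R u)) \<bullet> u" for t
  have N0: "0 \<le> N" by (simp add: N_def)
  have nu: "norm u \<le> N" "norm v \<le> N" by (auto simp: N_def)
  have small: "norm (t *\<^sub>R u + h *\<^sub>R v) \<le> h * N" "norm (t *\<^sub>R u) \<le> h * N"
    if "0 \<le> t" "t \<le> h" for t
  proof -
    have "norm (t *\<^sub>R u + h *\<^sub>R v) \<le> t * norm u + h * norm v"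
      using norm_triangle_ineq[of "t *\<^sub>R u" "h *\<^sub>R v"] that hpos by simp
    also have "\<dots> \<le> h * norm u + h * norm v" using that by (simp add: mult_right_mono)
    finally show "norm (t *\<^sub>R u + h *\<^sub>R v) \<le> h * N" by (simp add: N_def distrib_left)
    have "norm (t *\<^sub>R u) = t * norm u" using that by simp
    also have "\<dots> \<le> h * norm u" using that by (simp add: mult_right_mono)
    also have "\<dots> \<le> h * N" using nu hpos by simp
    finally show "norm (t *\<^sub>R u) \<le> h * N" .
  qed
  have inball: "x + t *\<^sub>R u + h *\<^sub>R v \<in> ball x r" "x + t *\<^sub>R u \<in> ball x r"
    if "0 \<le> t" "t \<le> h" for t
  proof -
    have e: "dist x (x + w) = norm w" for w :: "real^'n" by (simp add: dist_norm)
    show "x + t *\<^sub>R u + h *\<^sub>R v \<in> ball x r" using small(1)[OF that] hr e[of "t *\<^sub>R u + h *\<^sub>R v"]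
      by (simp add: N_def add.assoc)
    show "x + t *\<^sub>R u \<in> ball x r" using small(2)[OF that] hr e[of "t *\<^sub>R u"]
      by (simp add: N_def)
  qed
  have der: "DERIV \<phi> t :> \<phi>' t" if "0 \<le> t" "t \<le> h" for t
  proof -
    have d1: "((\<lambda>t. x + t *\<^sub>R u + h *\<^sub>R v) has_derivative (\<lambda>s. s *\<^sub>R u)) (at t)"
      by (auto intro!: derivative_eq_intros)
    have d2: "((\<lambda>t. x + t *\<^sub>R u) has_derivative (\<lambda>s. s *\<^sub>R u)) (at t)"
      by (auto intro!: derivative_eq_intros)
    have c1: "((\<lambda>t. f (x + t *\<^sub>R u + h *\<^sub>R v)) has_derivative
        (\<lambda>s. g (x + t *\<^sub>R u + h *\<^sub>R v) \<bullet> (s *\<^sub>R u))) (at t)"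
      using has_derivative_compose[OF d1 d[OF inball(1)[OF that]]] by (simp add: o_def)
    have c2: "((\<lambda>t. f (x + t *\<^sub>R u)) has_derivative
        (\<lambda>s. g (x + t *\<^sub>R u) \<bullet> (s *\<^sub>R u))) (at t)"
      using has_derivative_compose[OF d2 d[OF inball(2)[OF that]]] by (simp add: o_def)
    have "(\<phi> has_derivative (\<lambda>s. g (x + t *\<^sub>R u + h *\<^sub>R v) \<bullet> (s *\<^sub>R u) - g (x + t *\<^sub>R u) \<bullet> (s *\<^sub>R u))) (at t)"
      unfolding \<phi>_def[abs_def] by (rule has_derivative_diff[OF c1 c2])
    moreover have "(\<lambda>s. g (x + t *\<^sub>R u + h *\<^sub>R v) \<bullet> (s *\<^sub>R u) - g (x + t *\<^sub>R u) \<bullet> (s *\<^sub>R u)) = (*) (\<phi>' t)"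
      by (auto simp: fun_eq_iff \<phi>'_def inner_diff_left algebra_simps)
    ultimately show ?thesis by (simp add: has_field_derivative_def)
  qed
  obtain \<xi> where xi: "0 < \<xi>" "\<xi> < h" "\<phi> h - \<phi> 0 = (h - 0) * \<phi>' \<xi>"
    using MVT2[OF hpos, of \<phi> \<phi>'] der by auto
  define a where "a = \<xi> *\<^sub>R u + h *\<^sub>R v"
  define b where "b = \<xi> *\<^sub>R u"
  define rr where "rr y = g (x+y) - g x - H *v y" for y
  have na: "norm a \<le> h * N" and nb: "norm b \<le> h * N"
    using small[of \<xi>] xi by (auto simp: a_def b_def)
  have ra: "norm (rr a) \<le> \<epsilon> * (h * N)"
    using rb[of a] na hr e0 by (auto simp: rr_def N_def intro: order_trans mult_left_mono)
  have rbb: "norm (rr b) \<le> \<epsilon> * (h * N)"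
    using rb[of b] nb hr e0 by (auto simp: rr_def N_def intro: order_trans mult_left_mono)
  have "\<phi>' \<xi> = (H *v (a - b) + (rr a - rr b)) \<bullet> u"
    unfolding \<phi>'_def rr_def a_def b_def by (simp add: algebra_simps matrix_vector_right_distrib)
  also have "H *v (a - b) = h *\<^sub>R (H *v v)"
    by (simp add: a_def b_def vec_eq_iff matrix_vector_mult_def sum_distrib_left mult_ac)
  finally have phi'eq: "\<phi>' \<xi> - h * (u \<bullet> (H *v v)) = (rr a - rr b) \<bullet> u"
    by (simp add: inner_add_right inner_commute)
  have "\<bar>(rr a - rr b) \<bullet> u\<bar> \<le> norm (rr a - rr b) * norm u"
    by (rule Cauchy_Schwarz_ineq2)
  also have "\<dots> \<le> (2 * \<epsilon> * (h * N)) * N"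
  proof (rule mult_mono)
    show "norm (rr a - rr b) \<le> 2 * \<epsilon> * (h * N)"
      using norm_triangle_ineq4[of "rr a" "rr b"] ra rbb by linarith
  qed (use nu e0 hpos N0 in auto)
  finally have err: "\<bar>\<phi>' \<xi> - h * (u \<bullet> (H *v v))\<bar> \<le> 2 * \<epsilon> * h * N\<^sup>2"
    using phi'eq by (simp add: power2_eq_square mult.assoc)
  have "f (x + h *\<^sub>R u + h *\<^sub>R v) - f (x + h *\<^sub>R u) - f (x + h *\<^sub>R v) + f x
           - h\<^sup>2 * (u \<bullet> (H *v v)) = h * (\<phi>' \<xi> - h * (u \<bullet> (H *v v)))"
    using xi(3) by (simp add: \<phi>_def power2_eq_square algebra_simps)
  then have "\<bar>f (x + h *\<^sub>R u + h *\<^sub>R v) - f (x + h *\<^sub>R u) - f (x + h *\<^sub>R v) + f x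
           - h\<^sup>2 * (u \<bullet> (H *v v))\<bar> = h * \<bar>\<phi>' \<xi> - h * (u \<bullet> (H *v v))\<bar>"
    using hpos by (simp add: abs_mult)
  also have "\<dots> \<le> h * (2 * \<epsilon> * h * N\<^sup>2)" using err hpos by (simp add: mult_left_mono)
  finally show ?thesis by (simp add: N_def power2_eq_square mult_ac)
qed


lemma hess_symmetric:
  fixes f :: "real^'n \<Rightarrow> real"
  assumes "twice_differentiable_at f x"
  shows "u \<bullet> (hess f x *v v) = v \<bullet> (hess f x *v u)"
proof (rule ccontr)
  assume ne: "u \<bullet> (hess f x *v v) \<noteq> v \<bullet> (hess f x *v u)"
  obtain S where S: "open S" "x \<in> S" "\<And>y. y \<in> S \<Longrightarrow> f differentiable (at y)"
    "grad f differentiable (at x)"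
    using assms unfolding twice_differentiable_at_def by blast
  obtain r0 where r0: "r0 > 0" "ball x r0 \<subseteq> S" using S(1,2) openE by blast
  define H where "H = hess f x"
  define g where "g = grad f"
  have G: "(g has_derivative (\<lambda>h. H *v h)) (at x)" using hess_works[OF S(4)] by (simp add: H_def g_def)
  define e where "e = \<bar>u \<bullet> (H *v v) - v \<bullet> (H *v u)\<bar>"
  have e0: "e > 0" using ne by (simp add: e_def H_def)
  define N where "N = norm u + norm v"
  have N0: "N > 0"
  proof (rule ccontr)
    assume "\<not> N > 0"
    then have "norm u = 0" "norm v = 0" using norm_ge_zero[of u] norm_ge_zero[of v] unfolding N_def by linarith+
    then have "u = 0" "v = 0" by auto
    then show False using ne by simp
  qed
  define \<epsilon> where "\<epsilon> = e / (8 * N\<^sup>2)"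
  have eps0: "\<epsilon> > 0" using e0 N0 by (simp add: \<epsilon>_def)
  obtain dd where dd: "dd > 0" "\<And>y. norm (y - x) < dd \<Longrightarrow> norm (g y - g x - H *v (y - x)) \<le> \<epsilon> * norm (y - x)"
    using G eps0 unfolding has_derivative_at_alt by blast
  define r where "r = min r0 dd"
  have r0': "r > 0" using r0 dd by (simp add: r_def)
  have rb: "norm (g (x+y) - g x - H *v y) \<le> \<epsilon> * norm y" if "norm y < r" for y
    using dd(2)[of "x+y"] that by (simp add: r_def)
  have dv: "(f has_derivative (\<lambda>k. g y \<bullet> k)) (at y)" if "y \<in> ball x r" for y
    using grad_works[OF S(3)] r0(2) that by (auto simp: g_def r_def)
  define h where "h = r / (2 * N)"
  have h0: "h > 0" using r0' N0 by (simp add: h_def)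
  have hN: "h * N < r" using r0' N0 by (simp add: h_def)
  have A1: "\<bar>f (x + h *\<^sub>R u + h *\<^sub>R v) - f (x + h *\<^sub>R u) - f (x + h *\<^sub>R v) + f x
           - h\<^sup>2 * (u \<bullet> (H *v v))\<bar> \<le> 2 * \<epsilon> * h\<^sup>2 * N\<^sup>2"
    using second_diff_approx[of x r f g H \<epsilon> h u v, OF dv rb] eps0 h0 hN by (simp add: N_def)
  have A2: "\<bar>f (x + h *\<^sub>R v + h *\<^sub>R u) - f (x + h *\<^sub>R v) - f (x + h *\<^sub>R u) + f x
           - h\<^sup>2 * (v \<bullet> (H *v u))\<bar> \<le> 2 * \<epsilon> * h\<^sup>2 * N\<^sup>2"
    using second_diff_approx[of x r f g H \<epsilon> h v u, OF dv rb] eps0 h0 hN by (simp add: N_def add.commute)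
  have comm: "x + h *\<^sub>R v + h *\<^sub>R u = x + h *\<^sub>R u + h *\<^sub>R v" by (simp add: algebra_simps)
  have "h\<^sup>2 * e \<le> 4 * \<epsilon> * h\<^sup>2 * N\<^sup>2"
  proof -
    have "h\<^sup>2 * e = \<bar>h\<^sup>2 * (u \<bullet> (H *v v)) - h\<^sup>2 * (v \<bullet> (H *v u))\<bar>"
      by (simp add: e_def abs_mult right_diff_distrib[symmetric])
    then show ?thesis using A1 A2 unfolding comm by linarith
  qed
  also have "\<dots> = h\<^sup>2 * (e / 2)" using N0 by (simp add: \<epsilon>_def field_simps)
  finally have "e \<le> e / 2" using h0 by simp
  then show False using e0 by simp
qed


lemma mv_scaleR: "(A::real^'n^'m) *v (c *\<^sub>R v) = c *\<^sub>R (A *v v)"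
  by (simp add: vec_eq_iff matrix_vector_mult_def sum_distrib_left mult_ac)

lemma quad_nonneg_lin_zero:
  fixes a b :: real
  assumes "\<And>t. 0 \<le> 2 * t * a + t\<^sup>2 * b"
  shows "a = 0"
proof (rule ccontr)
  assume a: "a \<noteq> 0"
  define B where "B = \<bar>b\<bar> + 1"
  have B: "B > 0" "b \<le> B" by (auto simp: B_def)
  define t where "t = - a / B"
  have "2 * t * a + t\<^sup>2 * b = - 2 * a\<^sup>2 / B + a\<^sup>2 * b / B\<^sup>2"
    by (simp add: t_def power2_eq_square field_simps)
  also have "a\<^sup>2 * b / B\<^sup>2 \<le> a\<^sup>2 * B / B\<^sup>2"
    using B by (simp add: divide_right_mono mult_left_mono)
  also have "a\<^sup>2 * B / B\<^sup>2 = a\<^sup>2 / B" using B by (simp add: power2_eq_square)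
  finally have "2 * t * a + t\<^sup>2 * b \<le> - (a\<^sup>2 / B)" by simp
  moreover have "a\<^sup>2 / B > 0" using a B by simp
  ultimately show False using assms[of t] by linarith
qed

lemma rayleigh:
  fixes A :: "real^'n^'n"
  assumes sym: "\<And>u v. u \<bullet> (A *v v) = v \<bullet> (A *v u)"
    and sm: "is_smallest_eigenvalue A \<Lambda>"
  shows "\<Lambda> * (norm v)\<^sup>2 \<le> v \<bullet> (A *v v)"
proof -
  define q where "q v = v \<bullet> (A *v v)" for v
  have cont: "continuous_on (sphere 0 1) q"
    unfolding q_def by (intro continuous_intros)
  have ne: "sphere (0::real^'n) 1 \<noteq> {}"
  proof -
    obtain i :: 'n where True by blast
    have "axis i (1::real) \<in> sphere 0 1" by simp
    then show ?thesis by blast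
  qed
  obtain v0 where v0: "v0 \<in> sphere 0 1" "\<And>y. y \<in> sphere 0 1 \<Longrightarrow> q v0 \<le> q y"
    using continuous_attains_inf[OF compact_sphere ne cont] by blast
  define m where "m = q v0"
  have nv0: "norm v0 = 1" using v0 by simp
  have qscale: "q (c *\<^sub>R v) = c\<^sup>2 * q v" for c v
    by (simp add: q_def mv_scaleR power2_eq_square)
  have lower: "m * (norm v)\<^sup>2 \<le> q v" for v
  proof (cases "v = 0")
    case True then show ?thesis by (simp add: q_def)
  next
    case False
    then have nv: "norm v > 0" by simp
    have "inverse (norm v) *\<^sub>R v \<in> sphere 0 1" using nv by simp
    then have "m \<le> q (inverse (norm v) *\<^sub>R v)" using v0 by (simp add: m_def)
    also have "\<dots> = q v / (norm v)\<^sup>2" by (simp add: qscale power_inverse divide_inverse mult.commute)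
    finally show ?thesis using nv by (simp add: field_simps)
  qed
  have key: "w \<bullet> (A *v v0) - m * (w \<bullet> v0) = 0" for w
  proof (rule quad_nonneg_lin_zero[where b = "q w - m * (norm w)\<^sup>2"])
    fix t :: real
    have e1: "q (v0 + t *\<^sub>R w) = m + 2 * t * (w \<bullet> (A *v v0)) + t\<^sup>2 * q w"
      using sym[of v0 w]
      by (simp add: q_def m_def matrix_vector_right_distrib mv_scaleR inner_add_left inner_add_right
          power2_eq_square algebra_simps)
    have e2: "(norm (v0 + t *\<^sub>R w))\<^sup>2 = 1 + 2 * t * (w \<bullet> v0) + t\<^sup>2 * (norm w)\<^sup>2"
    proof -
      have "(norm (v0 + t *\<^sub>R w))\<^sup>2 = (v0 + t *\<^sub>R w) \<bullet> (v0 + t *\<^sub>R w)"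
        by (simp add: power2_norm_eq_inner)
      also have "\<dots> = v0 \<bullet> v0 + 2 * t * (w \<bullet> v0) + t\<^sup>2 * (w \<bullet> w)"
        by (simp add: inner_add_left inner_add_right inner_commute power2_eq_square algebra_simps)
      finally show ?thesis using nv0 by (simp add: dot_square_norm)
    qed
    have "m * (norm (v0 + t *\<^sub>R w))\<^sup>2 \<le> q (v0 + t *\<^sub>R w)" by (rule lower)
    then show "0 \<le> 2 * t * (w \<bullet> (A *v v0) - m * (w \<bullet> v0)) + t\<^sup>2 * (q w - m * (norm w)\<^sup>2)"
      unfolding e1 e2 by (simp add: algebra_simps)
  qed
  have "(A *v v0 - m *\<^sub>R v0) \<bullet> (A *v v0 - m *\<^sub>R v0) = 0"
    using key[of "A *v v0 - m *\<^sub>R v0"] by (simp add: inner_diff_right)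
  then have "A *v v0 - m *\<^sub>R v0 = 0" by simp
  then have "is_eigenvalue A m" using nv0 unfolding is_eigenvalue_def
    by (intro exI[of _ v0]) auto
  then have "\<Lambda> \<le> m" using sm by (simp add: is_smallest_eigenvalue_def)
  then have "\<Lambda> * (norm v)\<^sup>2 \<le> m * (norm v)\<^sup>2" by (simp add: mult_right_mono)
  also have "\<dots> \<le> q v" by (rule lower)
  finally show ?thesis by (simp add: q_def)
qed


lemma sqnorm_deriv:
  "((\<lambda>\<theta>. (norm (\<theta> - \<theta>0))\<^sup>2) has_derivative (\<lambda>h. (2 *\<^sub>R (y - \<theta>0)) \<bullet> h)) (at (y::real^'n))"
proof -
  have "((\<lambda>\<theta>. (\<theta> - \<theta>0) \<bullet> (\<theta> - \<theta>0)) has_derivative (\<lambda>h. (y - \<theta>0) \<bullet> h + h \<bullet> (y - \<theta>0))) (at y)"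
    by (auto intro!: derivative_eq_intros)
  moreover have "(\<lambda>h. (y - \<theta>0) \<bullet> h + h \<bullet> (y - \<theta>0)) = (\<lambda>h. (2 *\<^sub>R (y - \<theta>0)) \<bullet> h)"
    by (auto simp: fun_eq_iff inner_commute)
  ultimately show ?thesis by (simp add: power2_norm_eq_inner)
qed

lemma reg_facts:
  fixes l :: "real^'n \<Rightarrow> 'x \<Rightarrow> real"
  assumes td: "twice_differentiable_at (emp_loss l D) th"
    and mn: "\<forall>\<theta>. reg_emp_loss l \<theta>0 lam g D th \<le> reg_emp_loss l \<theta>0 lam g D \<theta>"
    and sm: "is_smallest_eigenvalue (hess (emp_loss l D) th) \<Lambda>"
  shows "grad (reg_emp_loss l \<theta>0 lam g D) th = 0"
    and "(\<Lambda> + 2 * lam * keepf g) * (norm d)\<^sup>2 \<le> d \<bullet> (hess (reg_emp_loss l \<theta>0 lam g D) th *v d)"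
proof -
  define E where "E = emp_loss l D"
  define L where "L = reg_emp_loss l \<theta>0 lam g D"
  define c where "c = lam * keepf g"
  have Leq: "L = (\<lambda>\<theta>. E \<theta> + c * (norm (\<theta> - \<theta>0))\<^sup>2)"
    by (auto simp: fun_eq_iff L_def E_def c_def reg_emp_loss_def)
  obtain S where S: "open S" "th \<in> S" "\<And>y. y \<in> S \<Longrightarrow> E differentiable (at y)"
    "grad E differentiable (at th)"
    using td unfolding twice_differentiable_at_def E_def by blast
  have dL: "(L has_derivative (\<lambda>h. (grad E y + (2 * c) *\<^sub>R (y - \<theta>0)) \<bullet> h)) (at y)" if "y \<in> S" for y
  proof -
    have "(L has_derivative (\<lambda>h. grad E y \<bullet> h + c * ((2 *\<^sub>R (y - \<theta>0)) \<bullet> h))) (at y)"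
      unfolding Leq
      by (intro has_derivative_add grad_works S(3) that has_derivative_mult_right sqnorm_deriv)
    then show ?thesis by (simp add: inner_add_left algebra_simps)
  qed
  have gL: "grad L y = grad E y + (2 * c) *\<^sub>R (y - \<theta>0)" if "y \<in> S" for y
    using grad_eq[OF dL[OF that]] .
  show g0: "grad (reg_emp_loss l \<theta>0 lam g D) th = 0"
  proof -
    have "(\<lambda>h. grad L th \<bullet> h) = (\<lambda>h. 0)"
      by (rule has_derivative_local_min[OF grad_works])
        (use dL[OF S(2)] mn in \<open>auto simp: L_def differentiable_def\<close>)
    then have "grad L th \<bullet> grad L th = 0" by metis
    then show ?thesis by (simp add: L_def)
  qed
  define HE where "HE = hess E th"
  define HL where "HL = HE + (2 * c) *\<^sub>R mat 1"
  have HLv: "HL *v h = HE *v h + (2 * c) *\<^sub>R h" for h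
    by (simp add: HL_def matrix_vector_mult_add_rdistrib scaleR_matrix_vector_assoc[symmetric])
  have "((\<lambda>y. grad E y + (2 * c) *\<^sub>R (y - \<theta>0)) has_derivative (\<lambda>h. HE *v h + (2 * c) *\<^sub>R h)) (at th)"
    unfolding HE_def by (auto intro!: derivative_eq_intros hess_works S(4))
  then have "(grad L has_derivative (\<lambda>h. HE *v h + (2 * c) *\<^sub>R h)) (at th)"
    by (rule has_derivative_transform_within_open[OF _ S(1) S(2)]) (simp add: gL)
  then have "hess L th = HL" using hess_eq HLv by (metis (no_types, lifting) ext)
  then have "d \<bullet> (hess L th *v d) = d \<bullet> (HE *v d) + 2 * c * (norm d)\<^sup>2"
    by (simp add: HLv inner_add_right power2_norm_eq_inner)
  moreover have "\<Lambda> * (norm d)\<^sup>2 \<le> d \<bullet> (HE *v d)"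
    using rayleigh[OF _ sm] hess_symmetric[OF td] by (simp add: HE_def E_def)
  ultimately show "(\<Lambda> + 2 * lam * keepf g) * (norm d)\<^sup>2 \<le> d \<bullet> (hess (reg_emp_loss l \<theta>0 lam g D) th *v d)"
    by (simp add: L_def c_def algebra_simps)
qed


lemma sum_loo:
  fixes f :: "'a \<Rightarrow> real"
  assumes "j < length D"
  shows "sum_list (map f D) = f (D ! j) + sum_list (map f (loo D j))"
proof -
  have "D = take j D @ D ! j # drop (Suc j) D" using assms by (simp add: id_take_nth_drop)
  then have "sum_list (map f D) = sum_list (map f (take j D @ D ! j # drop (Suc j) D))" by simp
  then show ?thesis by (simp add: loo_def algebra_simps)
qed

lemma reg_decomp:
  fixes l :: "real^'n \<Rightarrow> 'x \<Rightarrow> real"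
  assumes "length D = m" "0 < m" "j < m"
  shows "reg_emp_loss l \<theta>0 lam g D \<theta> = reg_loss l \<theta>0 lam g \<theta> (D ! j) / real m
     + (real m - 1) / real m * reg_emp_loss l \<theta>0 lam g (loo D j) \<theta>"
proof -
  have ll: "length (loo D j) = m - 1" using assms by (simp add: loo_def)
  have s: "sum_list (map (l \<theta>) (loo D j)) = (real m - 1) * emp_loss l (loo D j) \<theta>"
  proof (cases "m = 1")
    case True
    then have "loo D j = []" using ll by simp
    then show ?thesis using True by simp
  next
    case False
    then show ?thesis using ll assms by (simp add: emp_loss_def of_nat_diff)
  qed
  have eq: "emp_loss l D \<theta> = (l \<theta> (D ! j) + (real m - 1) * emp_loss l (loo D j) \<theta>) / real m"
    unfolding emp_loss_def[of l D] using sum_loo[of j D "l \<theta>"] assms s by simp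
  show ?thesis unfolding reg_emp_loss_def reg_loss_def eq using assms
    by (simp add: field_simps)
qed

lemma core:
  fixes l :: "real^'n \<Rightarrow> 'x \<Rightarrow> real"
  assumes len: "length D = m" "0 < m" "j < m"
    and td: "twice_differentiable_at (emp_loss l D) th"
    and mn: "\<forall>\<theta>. reg_emp_loss l \<theta>0 lam g D th \<le> reg_emp_loss l \<theta>0 lam g D \<theta>"
    and mn': "\<forall>\<theta>. reg_emp_loss l \<theta>0 lam g (loo D j) th' \<le> reg_emp_loss l \<theta>0 lam g (loo D j) \<theta>"
    and lip: "\<forall>x. \<eta>-lipschitz_on UNIV (\<lambda>\<theta>. reg_loss l \<theta>0 lam g \<theta> x)"
    and tay: "(let L = reg_emp_loss l \<theta>0 lam g D; t = th; d = th' - t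
           in L th' = L t + grad L t \<bullet> d + 1/2 * (d \<bullet> (hess L t *v d)))"
    and sm: "is_smallest_eigenvalue (hess (emp_loss l D) th) \<Lambda>"
    and cpos: "0 < \<Lambda> + 2 * lam * keepf g"
  shows "\<bar>reg_loss l \<theta>0 lam g th' (D ! j) - reg_loss l \<theta>0 lam g th (D ! j)\<bar>
          \<le> 2 * \<eta>\<^sup>2 / ((\<Lambda> + 2 * lam * keepf g) * real m)"
proof -
  define L where "L = reg_emp_loss l \<theta>0 lam g D"
  define L' where "L' = reg_emp_loss l \<theta>0 lam g (loo D j)"
  define r where "r \<theta> = reg_loss l \<theta>0 lam g \<theta> (D ! j)" for \<theta>
  define C where "C = \<Lambda> + 2 * lam * keepf g"
  define d where "d = th' - th"
  have C0: "C > 0" using cpos by (simp add: C_def)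
  have eta0: "0 \<le> \<eta>" using lip by (auto simp: lipschitz_on_def)
  have lipr: "\<bar>r th' - r th\<bar> \<le> \<eta> * norm d"
    using lip unfolding lipschitz_on_def r_def d_def by (auto simp: dist_real_def dist_norm)
  have m0: "real m > 0" using len by simp
  have upper: "L th' - L th \<le> \<eta> * norm d / real m"
  proof -
    have dec: "L \<theta> = r \<theta> / real m + (real m - 1) / real m * L' \<theta>" for \<theta>
      using reg_decomp[OF len] by (simp add: L_def L'_def r_def)
    have "L' th' \<le> L' th" using mn' by (simp add: L'_def)
    moreover have "(real m - 1) / real m \<ge> 0" using len by simp
    ultimately have "(real m - 1) / real m * L' th' \<le> (real m - 1) / real m * L' th"
      by (rule mult_left_mono)
    then have "L th' - L th \<le> (r th' - r th) / real m" unfolding dec by (simp add: diff_divide_distrib)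
    also have "\<dots> \<le> \<eta> * norm d / real m" using lipr m0 by (simp add: divide_right_mono)
    finally show ?thesis .
  qed
  have lower: "C * (norm d)\<^sup>2 / 2 \<le> L th' - L th"
  proof -
    have g0: "grad L th = 0" using reg_facts(1)[OF td mn sm] by (simp add: L_def)
    have q: "C * (norm d)\<^sup>2 \<le> d \<bullet> (hess L th *v d)"
      using reg_facts(2)[OF td mn sm, of d] by (simp add: L_def C_def)
    have "L th' = L th + 1/2 * (d \<bullet> (hess L th *v d))"
      using tay g0 by (simp add: L_def d_def Let_def)
    then show ?thesis using q by simp
  qed
  have nd: "norm d \<le> 2 * \<eta> / (C * real m)"
  proof (cases "norm d = 0")
    case True then show ?thesis using eta0 C0 m0 by simp
  next
    case False
    then have ndp: "norm d > 0" by simp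
    have "C * (norm d)\<^sup>2 / 2 \<le> \<eta> * norm d / real m" using upper lower by linarith
    then have "C * norm d * norm d * real m \<le> 2 * \<eta> * norm d"
      using m0 by (simp add: field_simps power2_eq_square)
    then have "C * norm d * real m \<le> 2 * \<eta>" using ndp
      by (metis mult.commute mult.left_commute mult_le_cancel_left_pos)
    then show ?thesis using C0 m0 by (simp add: field_simps)
  qed
  have "\<bar>r th' - r th\<bar> \<le> \<eta> * (2 * \<eta> / (C * real m))"
    using lipr nd eta0 by (meson mult_left_mono order_trans)
  then show ?thesis by (simp add: r_def C_def power2_eq_square mult_ac)
qed


theorem theorem2:
  fixes K :: nat
    and n :: "nat \<Rightarrow> nat"
    and M :: "nat \<Rightarrow> 'x measure"
    and l :: "real^'n \<Rightarrow> 'x \<Rightarrow> real"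
    and \<theta>0 :: "real^'n"
    and lam \<eta> :: real
    and gam \<Lambda> :: "nat \<Rightarrow> real"
    and thetahat :: "nat \<Rightarrow> 'x list \<Rightarrow> real^'n"
  assumes n_pos: "\<forall>k<K. 0 < n k"
    and prob: "\<forall>k<K. prob_space (M k)"
    and gam_range: "\<forall>k<K. 0 \<le> gam k \<and> gam k < 1"
    and lam_pos: "0 < lam"
    and minimizer_full: "\<forall>k<K. \<forall>S. length S = n k \<longrightarrow>
          (\<forall>\<theta>. reg_emp_loss l \<theta>0 lam (gam k) S (thetahat k S) \<le> reg_emp_loss l \<theta>0 lam (gam k) S \<theta>)"
    and minimizer_loo: "\<forall>k<K. \<forall>S. length S = n k \<longrightarrow> (\<forall>j<n k.
          (\<forall>\<theta>. reg_emp_loss l \<theta>0 lam (gam k) (loo S j) (thetahat k (loo S j))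
                \<le> reg_emp_loss l \<theta>0 lam (gam k) (loo S j) \<theta>))"
    and lipschitz: "\<forall>k<K. \<forall>x. \<eta>-lipschitz_on UNIV (\<lambda>\<theta>. reg_loss l \<theta>0 lam (gam k) \<theta> x)"
    and twice_diff: "\<forall>k<K. \<forall>S. length S = n k \<longrightarrow>
          twice_differentiable_at (emp_loss l S) (thetahat k S)"
    and taylor_exact: "\<forall>k<K. \<forall>S. length S = n k \<longrightarrow> (\<forall>j<n k.
          (let L = reg_emp_loss l \<theta>0 lam (gam k) S; th = thetahat k S;
               d = thetahat k (loo S j) - th
           in L (thetahat k (loo S j)) = L th + grad L th \<bullet> d + 1/2 * (d \<bullet> (hess L th *v d))))"
    and hess_psd: "\<forall>k<K. \<forall>S. length S = n k \<longrightarrow>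
          psd (hess (reg_emp_loss l \<theta>0 lam (gam k) S) (thetahat k S))"
    and Lambda_min: "\<forall>k<K. \<forall>S. length S = n k \<longrightarrow>
          is_smallest_eigenvalue (hess (emp_loss l S) (thetahat k S)) (\<Lambda> k)"
    and denom_pos: "\<forall>k<K. 0 < \<Lambda> k + 2 * lam * keepf (gam k)"
  shows "integral\<^sup>L (PiM (sample_index K n) (\<lambda>p. M (fst p)))
           (\<lambda>\<omega>. (\<Sum>j\<in>PiE {..<K} (\<lambda>k. {..<n k}).
               \<bar>Lprime_sample l \<theta>0 lam gam K n
                   (\<lambda>k. thetahat k (loo (dataset n \<omega> k) (j k)))
                   (\<lambda>k. dataset n \<omega> k ! j k)
                - Lprime_sample l \<theta>0 lam gam K n
                   (\<lambda>k. thetahat k (dataset n \<omega> k))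
                   (\<lambda>k. dataset n \<omega> k ! j k)\<bar>)
             / real (card (PiE {..<K} (\<lambda>k. {..<n k}))))
         \<le> (\<Sum>k<K. 2 * \<eta>\<^sup>2 /
               ((\<Lambda> k + 2 * lam * keepf (gam k)) * real (\<Sum>k'<K. n k')))"
proof -
  define N where "N = real (\<Sum>k'<K. n k')"
  define C where "C k = \<Lambda> k + 2 * lam * keepf (gam k)" for k
  define B where "B = (\<Sum>k<K. 2 * \<eta>\<^sup>2 / (C k * N))"
  have eta0: "0 \<le> \<eta>" if "K > 0"
    using lipschitz that by (auto simp: lipschitz_on_def)
  have B0: "0 \<le> B"
    unfolding B_def
  proof (rule sum_nonneg)
    fix k assume k: "k \<in> {..<K}"
    then have "C k > 0" using denom_pos by (simp add: C_def)
    moreover have "N \<ge> 0" by (simp add: N_def sum_nonneg)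
    ultimately show "0 \<le> 2 * \<eta>\<^sup>2 / (C k * N)" by simp
  qed
  have point: "\<bar>Lprime_sample l \<theta>0 lam gam K n
                   (\<lambda>k. thetahat k (loo (dataset n \<omega> k) (j k)))
                   (\<lambda>k. dataset n \<omega> k ! j k)
                - Lprime_sample l \<theta>0 lam gam K n
                   (\<lambda>k. thetahat k (dataset n \<omega> k))
                   (\<lambda>k. dataset n \<omega> k ! j k)\<bar> \<le> B"
    if j: "j \<in> PiE {..<K} (\<lambda>k. {..<n k})" for \<omega> j
  proof -
    define r where "r k t = reg_loss l \<theta>0 lam (gam k) t (dataset n \<omega> k ! j k)" for k t
    define t1 where "t1 k = thetahat k (loo (dataset n \<omega> k) (j k))" for k
    define t0 where "t0 k = thetahat k (dataset n \<omega> k)" for k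
    have each: "\<bar>r k (t1 k) - r k (t0 k)\<bar> \<le> 2 * \<eta>\<^sup>2 / (C k * real (n k))" if k: "k < K" for k
    proof -
      have len: "length (dataset n \<omega> k) = n k" by (simp add: dataset_def)
      have jk: "j k < n k" using j k by auto
      show ?thesis unfolding r_def t1_def t0_def C_def
        apply (rule core[OF len])
        using n_pos minimizer_full minimizer_loo lipschitz twice_diff taylor_exact Lambda_min denom_pos
          k jk len by auto
    qed
    have eqL: "Lprime_sample l \<theta>0 lam gam K n t1 (\<lambda>k. dataset n \<omega> k ! j k)
        - Lprime_sample l \<theta>0 lam gam K n t0 (\<lambda>k. dataset n \<omega> k ! j k)
        = (\<Sum>k<K. real (n k) / N * (r k (t1 k) - r k (t0 k)))"
      by (simp add: Lprime_sample_def N_def r_def sum_subtractf right_diff_distrib)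
    have "\<bar>Lprime_sample l \<theta>0 lam gam K n t1 (\<lambda>k. dataset n \<omega> k ! j k)
        - Lprime_sample l \<theta>0 lam gam K n t0 (\<lambda>k. dataset n \<omega> k ! j k)\<bar>
        \<le> (\<Sum>k<K. \<bar>real (n k) / N * (r k (t1 k) - r k (t0 k))\<bar>)"
      unfolding eqL by (rule sum_abs)
    also have "\<dots> \<le> (\<Sum>k<K. 2 * \<eta>\<^sup>2 / (C k * N))"
    proof (rule sum_mono)
      fix k assume k: "k \<in> {..<K}"
      have np: "real (n k) > 0" using n_pos k by simp
      have N0: "N \<ge> 0" by (simp add: N_def sum_nonneg)
      have "\<bar>real (n k) / N * (r k (t1 k) - r k (t0 k))\<bar> = real (n k) / N * \<bar>r k (t1 k) - r k (t0 k)\<bar>"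
        using N0 by (simp add: abs_mult)
      also have "\<dots> \<le> real (n k) / N * (2 * \<eta>\<^sup>2 / (C k * real (n k)))"
        using each[of k] k N0 np by (intro mult_left_mono) auto
      also have "\<dots> = 2 * \<eta>\<^sup>2 / (C k * N)" using np by (simp add: field_simps)
      finally show "\<bar>real (n k) / N * (r k (t1 k) - r k (t0 k))\<bar> \<le> 2 * \<eta>\<^sup>2 / (C k * N)" .
    qed
    finally show ?thesis by (simp add: B_def t1_def[abs_def] t0_def[abs_def])
  qed
  define F where "F \<omega> = (\<Sum>j\<in>PiE {..<K} (\<lambda>k. {..<n k}).
               \<bar>Lprime_sample l \<theta>0 lam gam K n
                   (\<lambda>k. thetahat k (loo (dataset n \<omega> k) (j k)))
                   (\<lambda>k. dataset n \<omega> k ! j k)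
                - Lprime_sample l \<theta>0 lam gam K n
                   (\<lambda>k. thetahat k (dataset n \<omega> k))
                   (\<lambda>k. dataset n \<omega> k ! j k)\<bar>)
             / real (card (PiE {..<K} (\<lambda>k. {..<n k})))" for \<omega>
  have Fle: "F \<omega> \<le> B" for \<omega>
  proof -
    let ?P = "PiE {..<K} (\<lambda>k. {..<n k})"
    have fin: "finite ?P" by (simp add: finite_PiE)
    have "(\<Sum>j\<in>?P. \<bar>Lprime_sample l \<theta>0 lam gam K n
                   (\<lambda>k. thetahat k (loo (dataset n \<omega> k) (j k)))
                   (\<lambda>k. dataset n \<omega> k ! j k)
                - Lprime_sample l \<theta>0 lam gam K n
                   (\<lambda>k. thetahat k (dataset n \<omega> k))
                   (\<lambda>k. dataset n \<omega> k ! j k)\<bar>) \<le> (\<Sum>j\<in>?P. B)"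
      by (rule sum_mono) (rule point)
    also have "\<dots> = real (card ?P) * B" by simp
    finally show ?thesis unfolding F_def
      by (cases "card ?P = 0") (auto simp: B0 divide_le_eq mult.commute)
  qed
  have ps: "prob_space (PiM (sample_index K n) (\<lambda>p. M (fst p)))"
    by (rule prob_space_PiM) (use prob in \<open>auto simp: sample_index_def\<close>)
  have "integral\<^sup>L (PiM (sample_index K n) (\<lambda>p. M (fst p))) F \<le> B"
  proof (cases "integrable (PiM (sample_index K n) (\<lambda>p. M (fst p))) F")
    case True
    then show ?thesis using prob_space.integral_le_const[OF ps True] Fle by simp
  next
    case False
    then show ?thesis using B0 by (simp add: not_integrable_integral_eq)
  qed
  then show ?thesis unfolding F_def[abs_def] B_def C_def N_def .
qed

end
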